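(* Let $d \in \mathbb N$ and let $c_0, \ldots, c_{d-1}$ be positive reals. Let $m \in \mathbb Z^+ \cup \{\infty\}$, let $(s_j)_{j\in\mathbb N}$ be an increasing sequence of reals with $s_j\ge 1$, and let $(\ell_i)_{i\in\mathbb N}$ be an increasing sequence of positive integers. Let $$Z_d = \bigoplus_{i=0}^{d-1} c_i\mathbb Z,\qquad K_m = \bigoplus_{i \in \mathbb N} (m \times s)_i\, \mathbb Z_{\ell_i}.$$ Then $\operatorname{asdim}_{AN}(Z_d \times K_m) \geq d+m$ (which is $\infty$ if $m=\infty$).
   Context: A normed group is a group $G$ with a norm $\|\cdot\|$ ($\|g\|=0$ iff $g=1$, $\|g^{-1}\|=\|g\|$, $\|gh\|\le\|g\|+\|h\|$), regarded as a metric space via $d(g,h)=\|g^{-1}h\|$. $\mathbb Z$ has norm $|x|$ and $\mathbb Z_\ell$ has norm $\|x\|=\min(x,\ell-x)$ for $x\in\{0,\dots,\ell-1\}$. For normed groups $G_i$ and positive reals $s_i$, the scaled direct sum $\bigoplus_i s_iG_i$ is $\bigoplus_iG_i$ with norm $\|g\|_s=\sum_i s_i\|g_i\|_{G_i}$; the direct product of two normed groups carries the $\ell^1$ norm $\|(g,h)\|=\|g\|+\|h\|$. For $m\in\mathbb Z^+$ let $P_{(m,j)}=\{jm,jm+1,\dots,(j+1)m-1\}$ and for $m=\infty$ let $P_{(\infty,j)}=\{j^2,j^2+1,\dots,(j+1)^2-1\}$ ($j\in\mathbb N$); these partition $\mathbb N$. The $m$-inflation $m\times s$ of a sequence $s=(s_j)$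 is the sequence with $(m\times s)_i=s_j$ whenever $i\in P_{(m,j)}$. $\operatorname{asdim}_{AN}(X)\le n$ means there exist $C>0$, $r_0>0$ such that for every $r\ge r_0$ there is a cover of $X$ by sets of diameter at most $Cr$ with every $r$-ball meeting at most $n+1$ members; $\operatorname{asdim}_{AN}(X)$ is the least such $n$ (or $\infty$). *)

theory Defs
  imports Main "HOL-Library.Extended_Nat"
begin

definition asdim_AN_le :: "'a set \<Rightarrow> ('a \<Rightarrow> 'a \<Rightarrow> real) \<Rightarrow> nat \<Rightarrow> bool" where
  "asdim_AN_le X dst n \<longleftrightarrow>
     (\<exists>C>0. \<exists>r0>0. \<forall>r\<ge>r0. \<exists>\<U> :: 'a set set.
        (\<forall>V\<in>\<U>. V \<subseteq> X) \<and> \<Union>\<U> = X \<and>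
        (\<forall>V\<in>\<U>. \<forall>a\<in>V. \<forall>b\<in>V. dst a b \<le> C * r) \<and>
        (\<forall>x\<in>X. finite {V\<in>\<U>. V \<inter> {y\<in>X. dst x y \<le> r} \<noteq> {}} \<and>
                 card {V\<in>\<U>. V \<inter> {y\<in>X. dst x y \<le> r} \<noteq> {}} \<le> n + 1))"

definition asdim_AN :: "'a set \<Rightarrow> ('a \<Rightarrow> 'a \<Rightarrow> real) \<Rightarrow> enat" where
  "asdim_AN X dst =
     (if \<exists>n. asdim_AN_le X dst n then enat (LEAST n. asdim_AN_le X dst n) else \<infinity>)"

definition part :: "enat \<Rightarrow> nat \<Rightarrow> nat set" where
  "part m j = (case m of enat k \<Rightarrow> {j * k ..< (j + 1) * k}
                       | \<infinity> \<Rightarrow> {j\<^sup>2 ..< (j + 1)\<^sup>2})"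

definition inflate :: "enat \<Rightarrow> (nat \<Rightarrow> real) \<Rightarrow> nat \<Rightarrow> real" where
  "inflate m s i = s (THE j. i \<in> part m j)"

text \<open>Norm on Z_l: elements represented by 0..l-1.\<close>
definition zmod_norm :: "int \<Rightarrow> int \<Rightarrow> int" where
  "zmod_norm l x = min x (l - x)"

definition Zd_carrier :: "nat \<Rightarrow> (nat \<Rightarrow> int) set" where
  "Zd_carrier d = {x. \<forall>i\<ge>d. x i = 0}"

definition Km_carrier :: "(nat \<Rightarrow> nat) \<Rightarrow> (nat \<Rightarrow> int) set" where
  "Km_carrier l = {y. (\<forall>i. 0 \<le> y i \<and> y i < int (l i)) \<and> finite {i. y i \<noteq> 0}}"

definition Zd_norm :: "nat \<Rightarrow> (nat \<Rightarrow> real) \<Rightarrow> (nat \<Rightarrow> int) \<Rightarrow> real" where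
  "Zd_norm d c x = (\<Sum>i<d. c i * real_of_int \<bar>x i\<bar>)"

definition Km_norm :: "(nat \<Rightarrow> real) \<Rightarrow> (nat \<Rightarrow> nat) \<Rightarrow> (nat \<Rightarrow> int) \<Rightarrow> real" where
  "Km_norm w l y = (\<Sum>i\<in>{i. y i \<noteq> 0}. w i * real_of_int (zmod_norm (int (l i)) (y i)))"

definition ZK_diff :: "(nat \<Rightarrow> nat) \<Rightarrow> (nat \<Rightarrow> int) \<times> (nat \<Rightarrow> int) \<Rightarrow> (nat \<Rightarrow> int) \<times> (nat \<Rightarrow> int)
                        \<Rightarrow> (nat \<Rightarrow> int) \<times> (nat \<Rightarrow> int)" where
  "ZK_diff l g h = ((\<lambda>i. fst h i - fst g i), \<lambda>i. (snd h i - snd g i) mod int (l i))"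

definition ZK_carrier :: "nat \<Rightarrow> (nat \<Rightarrow> nat) \<Rightarrow> ((nat \<Rightarrow> int) \<times> (nat \<Rightarrow> int)) set" where
  "ZK_carrier d l = Zd_carrier d \<times> Km_carrier l"

text \<open>d(g,h) = ||g^{-1} h||, with the l^1 norm on the product.\<close>
definition ZK_dist :: "nat \<Rightarrow> (nat \<Rightarrow> real) \<Rightarrow> enat \<Rightarrow> (nat \<Rightarrow> real) \<Rightarrow> (nat \<Rightarrow> nat)
    \<Rightarrow> (nat \<Rightarrow> int) \<times> (nat \<Rightarrow> int) \<Rightarrow> (nat \<Rightarrow> int) \<times> (nat \<Rightarrow> int) \<Rightarrow> real" where
  "ZK_dist d c m s l g h =
     (let u = ZK_diff l g h in Zd_norm d c (fst u) + Km_norm (inflate m s) l (snd u))"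

end

theory Submission
  imports Defs "HOL-Analysis.Brouwer_Fixpoint"
begin


lemma cube_sperner:
  fixes D p :: nat and lam :: "(nat \<Rightarrow> nat) \<Rightarrow> nat"
  assumes p0: "0 < p"
    and lamD: "\<And>x. (\<forall>j. x j \<le> p) \<Longrightarrow> lam x \<le> D"
    and ha: "\<And>x j. (\<forall>j. x j \<le> p) \<Longrightarrow> j < D \<Longrightarrow> x j = p \<Longrightarrow> lam x \<le> j"
    and hb: "\<And>x j. (\<forall>j. x j \<le> p) \<Longrightarrow> j < D \<Longrightarrow> x j = 0 \<Longrightarrow> lam x \<noteq> j"
  obtains b where "\<forall>k\<le>D. \<exists>x. (\<forall>j. x j \<le> p) \<and> (\<forall>j<D. b j \<le> x j \<and> x j \<le> Suc (b j)) \<and> lam x = k"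
proof -
  define lab where "lab x j = (if j < lam x then 0 else if j = lam x then 1
       else if x j = 0 then 0 else (1::nat))" for x j
  have red: "reduced D (lab x) = lam x" if "\<forall>j. x j \<le> p" for x
    by (rule reduced_labelling_unique) (auto simp: lab_def lamD[OF that])
  have "odd (card {s. ksimplex p D s \<and> (reduced D \<circ> lab) ` s = {..D}})"
  proof (rule kuhn_combinatorial[OF p0])
    show "\<forall>x j. (\<forall>j. x j \<le> p) \<and> j < D \<and> x j = 0 \<longrightarrow> lab x j = 0"
      using hb by (auto simp: lab_def)
    show "\<forall>x j. (\<forall>j. x j \<le> p) \<and> j < D \<and> x j = p \<longrightarrow> lab x j = 1"
    proof (intro allI impI)
      fix x j assume h: "(\<forall>j. x j \<le> p) \<and> j < D \<and> x j = p"
      then have "lam x \<le> j" using ha by blast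
      then show "lab x j = 1" using h p0 by (auto simp: lab_def)
    qed
  qed
  then have "{s. ksimplex p D s \<and> (reduced D \<circ> lab) ` s = {..D}} \<noteq> {}"
    by (rule odd_card_imp_not_empty)
  then obtain s b u where ks: "kuhn_simplex p D b u s" and rl: "(reduced D \<circ> lab) ` s = {..D}"
    by (auto elim: ksimplex.cases)
  interpret kuhn_simplex p D b u s by fact
  show ?thesis
  proof (rule that[of b], intro allI impI)
    fix k assume "k \<le> D"
    then obtain x where x: "x \<in> s" "k = reduced D (lab x)" using rl by force
    have xp: "\<forall>j. x j \<le> p" using s_le_p[OF x(1)] by auto
    show "\<exists>x. (\<forall>j. x j \<le> p) \<and> (\<forall>j<D. b j \<le> x j \<and> x j \<le> Suc (b j)) \<and> lam x = k"
      using xp x red[OF xp] base_le[OF x(1)] le_Suc_base[OF x(1)] by auto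
  qed
qed



lemma zmod_norm_small:
  fixes L z :: int
  assumes "0 < L" "2 * \<bar>z\<bar> < L"
  shows "zmod_norm L (z mod L) = \<bar>z\<bar>"
proof (cases "z \<ge> 0")
  case True
  then have "z mod L = z" using assms by (intro mod_pos_pos_trivial) auto
  then show ?thesis using True assms by (simp add: zmod_norm_def)
next
  case False
  then have "z mod L = z + L" using assms
  proof -
    have "(z + L) mod L = z + L" using assms False by (intro mod_pos_pos_trivial) auto
    then show ?thesis by simp
  qed
  then show ?thesis using False assms by (simp add: zmod_norm_def)
qed

lemma part_enat: "i \<in> part (enat k) j \<longleftrightarrow> j*k \<le> i \<and> i < (j+1)*k" by (simp add: Defs.part_def)
lemma part_inf: "i \<in> part \<infinity> j \<longleftrightarrow> j^2 \<le> i \<and> i < (j+1)^2" by (simp add: Defs.part_def)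

lemma part_unique:
  assumes "m \<noteq> 0" "i \<in> part m j" "i \<in> part m j'"
  shows "j = j'"
proof (cases m)
  case (enat k)
  then have k: "k > 0" using assms(1) by (simp add: zero_enat_def)
  have "\<not> j < j'" "\<not> j' < j"
  proof -
    show "\<not> j < j'"
    proof
      assume "j < j'" then have "(j+1)*k \<le> j'*k" using mult_le_mono1[of "j+1" j' k] by linarith
      moreover have "j*k \<le> i \<and> i < (j+1)*k" "j'*k \<le> i \<and> i < (j'+1)*k"
        using assms(2,3) enat part_enat by auto
      ultimately show False by linarith
    qed
    show "\<not> j' < j"
    proof
      assume "j' < j" then have "(j'+1)*k \<le> j*k" using mult_le_mono1[of "j'+1" j k] by linarith
      moreover have "j*k \<le> i \<and> i < (j+1)*k" "j'*k \<le> i \<and> i < (j'+1)*k"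
        using assms(2,3) enat part_enat by auto
      ultimately show False by linarith
    qed
  qed
  then show ?thesis by simp
next
  case infinity
  have "\<not> j < j'" "\<not> j' < j"
  proof -
    show "\<not> j < j'"
    proof
      assume "j < j'" then have "(j+1)^2 \<le> j'^2" by (simp add: power_mono)
      moreover have "j^2 \<le> i \<and> i < (j+1)^2" "j'^2 \<le> i \<and> i < (j'+1)^2"
        using assms(2,3) infinity part_inf by auto
      ultimately show False by linarith
    qed
    show "\<not> j' < j"
    proof
      assume "j' < j" then have "(j'+1)^2 \<le> j^2" by (simp add: power_mono)
      moreover have "j^2 \<le> i \<and> i < (j+1)^2" "j'^2 \<le> i \<and> i < (j'+1)^2"
        using assms(2,3) infinity part_inf by auto
      ultimately show False by linarith
    qed
  qed
  then show ?thesis by simp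
qed

lemma inflate_part:
  assumes "m \<noteq> 0" "i \<in> part m j"
  shows "inflate m s i = s j"
proof -
  have "(THE j. i \<in> part m j) = j"
    using assms part_unique[OF assms(1)] by (intro the_equality) auto
  then show ?thesis by (simp add: inflate_def)
qed



definition gphi :: "nat \<Rightarrow> nat \<Rightarrow> nat \<Rightarrow> nat \<Rightarrow> (nat \<Rightarrow> nat) \<Rightarrow> (nat \<Rightarrow> nat)
   \<Rightarrow> (nat \<Rightarrow> int) \<times> (nat \<Rightarrow> int)" where
  "gphi a e b0 T t x = ((\<lambda>i. if i < a then int (x i * t i) else 0),
      (\<lambda>i. if b0 \<le> i \<and> i < b0 + e then int (x (a + (i - b0)) * T) else 0))"

lemma abs_diff_help: "0 \<le> (A::int) \<Longrightarrow> A \<le> P \<Longrightarrow> 0 \<le> B \<Longrightarrow> B \<le> P \<Longrightarrow> 2 * P < L \<Longrightarrow> 2 * \<bar>A - B\<bar> < L"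
  by (auto simp: abs_if)

lemma dist_grid:
  fixes a e b0 T p :: nat and t :: "nat \<Rightarrow> nat" and sj :: real and x y :: "nat \<Rightarrow> nat"
  assumes ad: "a \<le> d"
    and infl: "\<And>i. b0 \<le> i \<Longrightarrow> i < b0 + e \<Longrightarrow> inflate m s i = sj"
    and lbig: "\<And>i. b0 \<le> i \<Longrightarrow> i < b0 + e \<Longrightarrow> 2 * p * T < l i"
    and xp: "\<forall>j. x j \<le> p" and yp: "\<forall>j. y j \<le> p"
  shows "ZK_dist d c m s l (gphi a e b0 T t x) (gphi a e b0 T t y) =
     (\<Sum>i<a. c i * (real (t i) * \<bar>real (y i) - real (x i)\<bar>)) +
     (\<Sum>i\<in>{b0..<b0+e}. sj * (real T * \<bar>real (y (a + (i - b0))) - real (x (a + (i - b0)))\<bar>))"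
proof -
  define u where "u = ZK_diff l (gphi a e b0 T t x) (gphi a e b0 T t y)"
  have fu: "fst u i = (if i < a then int (y i * t i) - int (x i * t i) else 0)" for i
    by (simp add: u_def ZK_diff_def gphi_def)
  define v where "v i = (if b0 \<le> i \<and> i < b0 + e then int (y (a + (i - b0)) * T) - int (x (a + (i - b0)) * T) else 0)" for i
  have su: "snd u i = v i mod int (l i)" for i
    by (simp add: u_def ZK_diff_def gphi_def v_def)
  have Z: "Zd_norm d c (fst u) = (\<Sum>i<a. c i * (real (t i) * \<bar>real (y i) - real (x i)\<bar>))"
    unfolding Zd_norm_def
  proof (rule sum.mono_neutral_cong_right)
    show "{..<a} \<subseteq> {..<d}" using ad by auto
    show "\<forall>i\<in>{..<d} - {..<a}. c i * real_of_int \<bar>fst u i\<bar> = 0" by (auto simp: fu)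
    fix i assume "i \<in> {..<a}"
    then have "real_of_int \<bar>fst u i\<bar> = real (t i) * \<bar>real (y i) - real (x i)\<bar>"
      by (simp add: fu left_diff_distrib[symmetric] abs_mult)
    then show "c i * real_of_int \<bar>fst u i\<bar> = c i * (real (t i) * \<bar>real (y i) - real (x i)\<bar>)"
      by simp
  qed simp
  have step: "real_of_int (zmod_norm (int (l i)) (snd u i)) =
      real T * \<bar>real (y (a + (i - b0))) - real (x (a + (i - b0)))\<bar>"
    if i: "b0 \<le> i" "i < b0 + e" for i
  proof -
    let ?Y = "y (a + (i - b0))" and ?X = "x (a + (i - b0))"
    have "?Y * T \<le> p * T" "?X * T \<le> p * T" using xp yp by auto
    then have h: "int (?Y * T) \<le> int (p * T)" "int (?X * T) \<le> int (p * T)" by linarith+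
    have h2: "2 * int (p * T) < int (l i)" using lbig[OF i] by linarith
    have "2 * \<bar>int (?Y * T) - int (?X * T)\<bar> < int (l i)"
      by (rule abs_diff_help[OF _ h(1) _ h(2) h2]) auto
    then have "2 * \<bar>v i\<bar> < int (l i)" using i unfolding v_def by simp
    then have "zmod_norm (int (l i)) (snd u i) = \<bar>v i\<bar>"
      unfolding su by (intro zmod_norm_small) auto
    moreover have "real_of_int \<bar>v i\<bar> = real T * \<bar>real ?Y - real ?X\<bar>"
      using i by (simp add: v_def right_diff_distrib[symmetric] left_diff_distrib[symmetric] abs_mult)
    ultimately show ?thesis by simp
  qed
  have K: "Km_norm (inflate m s) l (snd u) =
     (\<Sum>i\<in>{b0..<b0+e}. sj * (real T * \<bar>real (y (a + (i - b0))) - real (x (a + (i - b0)))\<bar>))"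
    unfolding Km_norm_def
  proof (rule sum.mono_neutral_cong_left)
    show "{i. snd u i \<noteq> 0} \<subseteq> {b0..<b0+e}"
      by (auto simp: su v_def)
    show "\<forall>i\<in>{b0..<b0 + e} - {i. snd u i \<noteq> 0}.
        sj * (real T * \<bar>real (y (a + (i - b0))) - real (x (a + (i - b0)))\<bar>) = 0"
    proof
      fix i assume "i \<in> {b0..<b0 + e} - {i. snd u i \<noteq> 0}"
      then have i: "b0 \<le> i" "i < b0 + e" "snd u i = 0" by auto
      have "real_of_int (zmod_norm (int (l i)) (snd u i)) = 0"
        using i(3) by (simp add: zmod_norm_def)
      then show "sj * (real T * \<bar>real (y (a + (i - b0))) - real (x (a + (i - b0)))\<bar>) = 0"
        using step[OF i(1,2)] by simp
    qed
    fix i assume "i \<in> {i. snd u i \<noteq> 0}"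
    then have i: "b0 \<le> i" "i < b0 + e" by (auto simp: su v_def split: if_splits)
    show "inflate m s i * real_of_int (zmod_norm (int (l i)) (snd u i)) =
        sj * (real T * \<bar>real (y (a + (i - b0))) - real (x (a + (i - b0)))\<bar>)"
      using step[OF i] infl[OF i] by simp
  qed simp
  show ?thesis
    unfolding ZK_dist_def Let_def u_def[symmetric] Z K ..
qed



lemma core:
  fixes d a e b0 T p n :: nat and c s :: "nat \<Rightarrow> real" and m :: enat and l :: "nat \<Rightarrow> nat"
    and sj C r :: real and U :: "((nat \<Rightarrow> int) \<times> (nat \<Rightarrow> int)) set set"
  assumes c_pos: "\<forall>i<d. c i > 0"
    and ad: "a \<le> d" and nD: "n < a + e"
    and infl: "\<And>i. b0 \<le> i \<Longrightarrow> i < b0 + e \<Longrightarrow> inflate m s i = sj"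
    and sj1: "sj \<ge> 1" and T1: "T \<ge> 1"
    and lbig: "\<And>i. b0 \<le> i \<Longrightarrow> i < b0 + e \<Longrightarrow> 2 * p * T < l i"
    and pbig: "C * real (a + e) * (1 + (\<Sum>i<d. c i)) < real p"
    and Cpos: "C > 0" and l_pos: "\<forall>i. l i > 0"
    and r_def: "r = real (a + e) * real T * sj * (1 + (\<Sum>i<d. c i))"
    and Usub: "\<forall>V\<in>U. V \<subseteq> ZK_carrier d l" and Ucov: "\<Union>U = ZK_carrier d l"
    and Udiam: "\<forall>V\<in>U. \<forall>x\<in>V. \<forall>y\<in>V. ZK_dist d c m s l x y \<le> C * r"
    and Umult: "\<forall>x\<in>ZK_carrier d l.
        finite {V\<in>U. V \<inter> {y\<in>ZK_carrier d l. ZK_dist d c m s l x y \<le> r} \<noteq> {}} \<and>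
        card {V\<in>U. V \<inter> {y\<in>ZK_carrier d l. ZK_dist d c m s l x y \<le> r} \<noteq> {}} \<le> n + 1"
  shows False
proof -
  define D where "D = a + e"
  define M where "M = (\<Sum>i<d. c i)"
  define X where "X = ZK_carrier d l"
  define dst where "dst = ZK_dist d c m s l"
  have M0: "M \<ge> 0" unfolding M_def using c_pos by (intro sum_nonneg) auto
  have D1: "D \<ge> 1" using nD D_def by simp
  have cpa: "0 \<le> c i" if "i < a" for i
  proof -
    have "i < d" using ad that by simp
    then show ?thesis using c_pos less_imp_le by blast
  qed
  define t where "t i = nat \<lceil>real T * sj / c i\<rceil>" for i
  define \<phi> where "\<phi> = gphi a e b0 T t"
  have p0: "0 < p"
  proof -
    have "0 \<le> C * real (a + e) * (1 + M)" using Cpos M0 by simp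
    then show ?thesis using pbig M_def by simp
  qed
  have "real T \<ge> 1" using T1 by simp
  then have Tsj: "real T * sj \<ge> 1" using mult_mono[of 1 "real T" 1 sj] sj1 by simp
  have ct: "real T * sj \<le> c i * real (t i) \<and> c i * real (t i) \<le> real T * sj + c i" if "i < a" for i
  proof -
    have ci: "c i > 0" using c_pos that ad by auto
    define q where "q = real T * sj / c i"
    have q0: "q > 0" using ci Tsj unfolding q_def by simp
    have tq: "real (t i) = of_int \<lceil>q\<rceil>" unfolding t_def q_def[symmetric] using q0 by simp
    have "q \<le> real (t i)" "real (t i) < q + 1" unfolding tq by linarith+
    moreover have "c i * q = real T * sj" unfolding q_def using ci by simp
    ultimately have "c i * q \<le> c i * real (t i)" "c i * real (t i) \<le> c i * (q + 1)"
      using ci by (intro mult_left_mono; simp)+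
    then show ?thesis using \<open>c i * q = real T * sj\<close> by (simp add: distrib_left)
  qed
  have inX: "\<phi> x \<in> X" if G: "\<forall>j. x j \<le> p" for x
  proof -
    have 1: "fst (\<phi> x) \<in> Zd_carrier d" using ad by (auto simp: \<phi>_def gphi_def Zd_carrier_def)
    have lt: "x (a + (i - b0)) * T < l i" if i: "b0 \<le> i" "i < b0 + e" for i
    proof -
      have "x (a + (i - b0)) * T \<le> p * T" using G by simp
      also have "\<dots> < l i" using lbig[of i] i by linarith
      finally show ?thesis .
    qed
    have fin: "finite {i. snd (\<phi> x) i \<noteq> 0}"
      by (rule finite_subset[of _ "{b0..<b0+e}"]) (auto simp: \<phi>_def gphi_def split: if_splits)
    have lt': "int (x (a + i - b0)) * int T < int (l i)" if i: "b0 \<le> i" "i < b0 + e" for i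
      using lt[OF i] i by (metis Nat.add_diff_assoc of_nat_less_iff of_nat_mult)
    have "snd (\<phi> x) \<in> Km_carrier l" unfolding Km_carrier_def
      using lt' fin l_pos by (auto simp: \<phi>_def gphi_def)
    then have "\<phi> x \<in> Zd_carrier d \<times> Km_carrier l" using 1 by (simp add: mem_Times_iff)
    then show ?thesis unfolding X_def ZK_carrier_def .
  qed
  have dform: "dst (\<phi> x) (\<phi> y) =
     (\<Sum>i<a. c i * (real (t i) * \<bar>real (y i) - real (x i)\<bar>)) +
     (\<Sum>i\<in>{b0..<b0+e}. sj * (real T * \<bar>real (y (a + (i - b0))) - real (x (a + (i - b0)))\<bar>))"
    if "\<forall>j. x j \<le> p" "\<forall>j. y j \<le> p" for x y
    unfolding dst_def \<phi>_def using that by (intro dist_grid[OF ad infl lbig]) auto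
  have upper: "dst (\<phi> x) (\<phi> y) \<le> r"
    if G: "\<forall>j. x j \<le> p" "\<forall>j. y j \<le> p" and cl: "\<forall>k<D. \<bar>real (y k) - real (x k)\<bar> \<le> 1" for x y
  proof -
    have "(\<Sum>i<a. c i * (real (t i) * \<bar>real (y i) - real (x i)\<bar>)) \<le> (\<Sum>i<a. real T * sj + c i)"
    proof (rule sum_mono)
      fix i assume "i \<in> {..<a}"
      then have i: "i < a" by simp
      have ci: "c i > 0" using c_pos i ad by auto
      have "c i * (real (t i) * \<bar>real (y i) - real (x i)\<bar>) \<le> c i * (real (t i) * 1)"
        using cl i ci D_def by (intro mult_left_mono) auto
      then show "c i * (real (t i) * \<bar>real (y i) - real (x i)\<bar>) \<le> real T * sj + c i"
        using ct[OF i] by simp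
    qed
    also have "\<dots> = real a * (real T * sj) + (\<Sum>i<a. c i)" by (simp add: sum.distrib)
    also have "(\<Sum>i<a. c i) \<le> M" unfolding M_def using ad c_pos
      by (intro sum_mono2) auto
    finally have Z: "(\<Sum>i<a. c i * (real (t i) * \<bar>real (y i) - real (x i)\<bar>)) \<le> real a * (real T * sj) + M"
      by simp
    have "(\<Sum>i\<in>{b0..<b0+e}. sj * (real T * \<bar>real (y (a + (i - b0))) - real (x (a + (i - b0)))\<bar>))
        \<le> (\<Sum>i\<in>{b0..<b0+e}. sj * (real T * 1))"
    proof (rule sum_mono)
      fix i assume "i \<in> {b0..<b0+e}"
      then have "a + (i - b0) < D" unfolding D_def by auto
      then show "sj * (real T * \<bar>real (y (a + (i - b0))) - real (x (a + (i - b0)))\<bar>) \<le> sj * (real T * 1)"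
        using cl sj1 by (intro mult_left_mono) auto
    qed
    also have "\<dots> = real e * (real T * sj)" by simp
    finally have K: "(\<Sum>i\<in>{b0..<b0+e}. sj * (real T * \<bar>real (y (a + (i - b0))) - real (x (a + (i - b0)))\<bar>))
        \<le> real e * (real T * sj)" .
    have "real D \<ge> 1" using D1 by simp
    then have "real D * (real T * sj) \<ge> 1" using mult_mono[of 1 "real D" 1 "real T * sj"] Tsj by simp
    then have "1 * M \<le> real D * (real T * sj) * M" using M0 by (intro mult_right_mono) auto
    then have "real D * (real T * sj) + M \<le> r"
      unfolding r_def D_def[symmetric] M_def[symmetric] by (simp add: algebra_simps)
    then show ?thesis using Z K dform[OF G] unfolding D_def by (simp add: algebra_simps)
  qed
  have lower: "dst (\<phi> x) (\<phi> y) \<ge> real T * sj * \<bar>real (y k) - real (x k)\<bar>"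
    if G: "\<forall>j. x j \<le> p" "\<forall>j. y j \<le> p" and k: "k < D" for x y k
  proof -
    have Znn: "0 \<le> (\<Sum>i<a. c i * (real (t i) * \<bar>real (y i) - real (x i)\<bar>))"
    proof (rule sum_nonneg)
      fix i assume "i \<in> {..<a}"
      then have "c i > 0" using c_pos ad by auto
      then show "0 \<le> c i * (real (t i) * \<bar>real (y i) - real (x i)\<bar>)" by simp
    qed
    have Knn: "0 \<le> (\<Sum>i\<in>{b0..<b0+e}. sj * (real T * \<bar>real (y (a + (i - b0))) - real (x (a + (i - b0)))\<bar>))"
      using sj1 by (intro sum_nonneg) auto
    show ?thesis
    proof (cases "k < a")
      case True
      have "real T * sj * \<bar>real (y k) - real (x k)\<bar> \<le> c k * real (t k) * \<bar>real (y k) - real (x k)\<bar>"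
        using ct[OF True] by (intro mult_right_mono) auto
      also have "\<dots> \<le> (\<Sum>i<a. c i * (real (t i) * \<bar>real (y i) - real (x i)\<bar>))"
        using True
        by (subst mult.assoc, intro member_le_sum[where f = "\<lambda>i. c i * (real (t i) * \<bar>real (y i) - real (x i)\<bar>)"])
          (auto intro!: mult_nonneg_nonneg cpa)
      finally show ?thesis using dform[OF G] Knn by simp
    next
      case False
      define i where "i = b0 + (k - a)"
      have i: "i \<in> {b0..<b0+e}" "a + (i - b0) = k" using False k D_def i_def by auto
      have "real T * sj * \<bar>real (y k) - real (x k)\<bar>
          = sj * (real T * \<bar>real (y (a + (i - b0))) - real (x (a + (i - b0)))\<bar>)" using i by simp
      also have "\<dots> \<le> (\<Sum>i\<in>{b0..<b0+e}. sj * (real T * \<bar>real (y (a + (i - b0))) - real (x (a + (i - b0)))\<bar>))"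
        using sj1 i(1)
        by (intro member_le_sum[where f = "\<lambda>i. sj * (real T * \<bar>real (y (a + (i - b0))) - real (x (a + (i - b0)))\<bar>)"]) auto
      finally show ?thesis using dform[OF G] Znn by simp
    qed
  qed
  define V where "V x = (SOME W. W \<in> U \<and> \<phi> x \<in> W)" for x
  have V: "V x \<in> U \<and> \<phi> x \<in> V x" if G: "\<forall>j. x j \<le> p" for x
  proof -
    have "\<phi> x \<in> \<Union>U" using inX[OF G] Ucov X_def by simp
    then have "\<exists>W. W \<in> U \<and> \<phi> x \<in> W" by blast
    then show ?thesis unfolding V_def by (rule someI_ex)
  qed
  define grp where "grp W = (LEAST j. j = D \<or> (\<exists>y. (\<forall>j. y j \<le> p) \<and> y j = p \<and> \<phi> y \<in> W))" for W
  define lam where "lam x = grp (V x)" for x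
  have grpD: "grp W \<le> D" for W unfolding grp_def by (rule Least_le) simp
  have grpP: "grp W = D \<or> (\<exists>y. (\<forall>j. y j \<le> p) \<and> y (grp W) = p \<and> \<phi> y \<in> W)" for W
    unfolding grp_def by (rule LeastI_ex) blast
  have Cr: "C * r < real T * sj * real p"
  proof -
    have "C * r = real T * sj * (C * real (a + e) * (1 + M))"
      unfolding r_def M_def by (simp add: algebra_simps)
    also have "\<dots> < real T * sj * real p"
      using pbig Tsj unfolding M_def by (intro mult_strict_left_mono) auto
    finally show ?thesis .
  qed
  obtain b where bw: "\<forall>k\<le>D. \<exists>x. (\<forall>j. x j \<le> p) \<and> (\<forall>j<D. b j \<le> x j \<and> x j \<le> Suc (b j)) \<and> lam x = k"
  proof (rule cube_sperner[OF p0, of lam D])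
    show "\<And>x. \<forall>j. x j \<le> p \<Longrightarrow> lam x \<le> D" using grpD lam_def by simp
    show "\<And>x j. \<forall>j. x j \<le> p \<Longrightarrow> j < D \<Longrightarrow> x j = p \<Longrightarrow> lam x \<le> j"
      unfolding lam_def grp_def using V by (intro Least_le) blast
    show "\<And>x j. \<forall>j. x j \<le> p \<Longrightarrow> j < D \<Longrightarrow> x j = 0 \<Longrightarrow> lam x \<noteq> j"
    proof
      fix x j assume G: "\<forall>j. x j \<le> p" and j: "j < D" "x j = 0" "lam x = j"
      then obtain y where y: "\<forall>j. y j \<le> p" "y j = p" "\<phi> y \<in> V x"
        using grpP[of "V x"] unfolding lam_def by auto
      have "real T * sj * real p \<le> dst (\<phi> x) (\<phi> y)"
        using lower[OF G y(1) j(1)] j y by simp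
      moreover have "dst (\<phi> x) (\<phi> y) \<le> C * r"
        using Udiam V[OF G] y(3) unfolding dst_def by blast
      ultimately show False using Cr by simp
    qed
  qed blast
  then have "\<forall>k. \<exists>x. k \<le> D \<longrightarrow> (\<forall>j. x j \<le> p) \<and> (\<forall>j<D. b j \<le> x j \<and> x j \<le> Suc (b j)) \<and> lam x = k"
    by blast
  then obtain w where w0: "\<forall>k. k \<le> D \<longrightarrow> (\<forall>j. w k j \<le> p) \<and> (\<forall>j<D. b j \<le> w k j \<and> w k j \<le> Suc (b j)) \<and> lam (w k) = k"
    by (rule choice[THEN exE]) 
  have w: "(\<forall>j. w k j \<le> p) \<and> (\<forall>j<D. b j \<le> w k j \<and> w k j \<le> Suc (b j)) \<and> lam (w k) = k" if "k \<le> D" for k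
    using w0 that by blast
  define z where "z = w 0"
  have zG: "\<forall>j. z j \<le> p" using w[of 0] z_def by simp
  define S where "S = {W\<in>U. W \<inter> {y\<in>X. dst (\<phi> z) y \<le> r} \<noteq> {}}"
  have Sfin: "finite S" and Scard: "card S \<le> n + 1"
    using Umult inX[OF zG] unfolding S_def X_def dst_def by auto
  have inS: "V (w k) \<in> S" if k: "k \<le> D" for k
  proof -
    have G: "\<forall>j. w k j \<le> p" using w[OF k] by simp
    have "\<forall>j<D. \<bar>real (w k j) - real (z j)\<bar> \<le> 1"
      using w[OF k] w[of 0] z_def by fastforce
    then have "dst (\<phi> z) (\<phi> (w k)) \<le> r" using upper[OF zG G] by simp
    then show ?thesis unfolding S_def using V[OF G] inX[OF G] by blast
  qed
  have inj: "inj_on (\<lambda>k. V (w k)) {..D}"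
  proof (rule inj_onI)
    fix k k' assume kk: "k \<in> {..D}" "k' \<in> {..D}" "V (w k) = V (w k')"
    have "lam (w k) = k" "lam (w k') = k'" using w kk(1,2) by auto
    then show "k = k'" using kk(3) unfolding lam_def by metis
  qed
  have "card ((\<lambda>k. V (w k)) ` {..D}) \<le> card S"
    using inS Sfin by (intro card_mono) auto
  then have "D + 1 \<le> card S" using card_image[OF inj] by simp
  then show False using Scard nD D_def by simp
qed



lemma finish:
  fixes d a e n :: nat and c s :: "nat \<Rightarrow> real" and m :: enat and l :: "nat \<Rightarrow> nat"
  assumes c_pos: "\<forall>i<d. c i > 0" and s_ge1: "\<forall>j. s j \<ge> 1"
    and l_mono: "strict_mono l" and l_pos: "\<forall>i. l i > 0"
    and P: "asdim_AN_le (ZK_carrier d l) (ZK_dist d c m s l) n"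
    and ad: "a \<le> d" and nD: "n < a + e"
    and blocks: "\<And>j0. \<exists>j b0. j0 \<le> b0 \<and> (\<forall>i. b0 \<le> i \<longrightarrow> i < b0 + e \<longrightarrow> inflate m s i = s j)"
  shows False
proof -
  obtain C r0 where C: "C > 0" and r0: "r0 > 0" and H: "\<forall>r\<ge>r0. \<exists>\<U>.
        (\<forall>V\<in>\<U>. V \<subseteq> ZK_carrier d l) \<and> \<Union>\<U> = ZK_carrier d l \<and>
        (\<forall>V\<in>\<U>. \<forall>a\<in>V. \<forall>b\<in>V. ZK_dist d c m s l a b \<le> C * r) \<and>
        (\<forall>x\<in>ZK_carrier d l. finite {V\<in>\<U>. V \<inter> {y\<in>ZK_carrier d l. ZK_dist d c m s l x y \<le> r} \<noteq> {}} \<and>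
                 card {V\<in>\<U>. V \<inter> {y\<in>ZK_carrier d l. ZK_dist d c m s l x y \<le> r} \<noteq> {}} \<le> n + 1)"
    using P unfolding asdim_AN_le_def by (elim exE conjE) (rule that; assumption)
  define M where "M = (\<Sum>i<d. c i)"
  have M0: "M \<ge> 0" unfolding M_def using c_pos by (intro sum_nonneg) auto
  define T where "T = nat \<lceil>r0\<rceil> + 1"
  have T1: "T \<ge> 1" by (simp add: T_def)
  have Tr0: "real T \<ge> r0" unfolding T_def using r0 by linarith
  define q where "q = C * real (a + e) * (1 + M)"
  have q0: "q \<ge> 0" unfolding q_def using C M0 by simp
  define p where "p = nat \<lceil>q\<rceil> + 1"
  have pbig: "q < real p" unfolding p_def using q0 by linarith
  obtain j b0 where b0: "2 * p * T + 1 \<le> b0" and infl: "\<forall>i. b0 \<le> i \<longrightarrow> i < b0 + e \<longrightarrow> inflate m s i = s j"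
    using blocks by blast
  define r where "r = real (a + e) * real T * s j * (1 + M)"
  have "real (a + e) \<ge> 1" using nD by simp
  moreover have "s j \<ge> 1" using s_ge1 by simp
  ultimately have "real (a + e) * s j * (1 + M) \<ge> 1"
    using M0 mult_mono[of 1 "real (a+e)" 1 "s j"] mult_mono[of 1 "real (a+e) * s j" 1 "1 + M"] by simp
  then have "real T * 1 \<le> real T * (real (a + e) * s j * (1 + M))"
    by (intro mult_left_mono) auto
  then have rr0: "r \<ge> r0" using Tr0 unfolding r_def by (simp add: algebra_simps)
  obtain U where U: "\<forall>V\<in>U. V \<subseteq> ZK_carrier d l" "\<Union>U = ZK_carrier d l"
        "\<forall>V\<in>U. \<forall>a\<in>V. \<forall>b\<in>V. ZK_dist d c m s l a b \<le> C * r"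
        "\<forall>x\<in>ZK_carrier d l. finite {V\<in>U. V \<inter> {y\<in>ZK_carrier d l. ZK_dist d c m s l x y \<le> r} \<noteq> {}} \<and>
                 card {V\<in>U. V \<inter> {y\<in>ZK_carrier d l. ZK_dist d c m s l x y \<le> r} \<noteq> {}} \<le> n + 1"
    using H[rule_format, OF rr0] by (elim exE conjE) (rule that; assumption)
  show False
  proof (rule core[OF c_pos ad nD _ _ T1 _ _ C l_pos _ U])
    show "\<And>i. b0 \<le> i \<Longrightarrow> i < b0 + e \<Longrightarrow> inflate m s i = s j" using infl by blast
    show "1 \<le> s j" using s_ge1 by simp
    show "\<And>i. b0 \<le> i \<Longrightarrow> i < b0 + e \<Longrightarrow> 2 * p * T < l i"
    proof -
      fix i assume "b0 \<le> i"
      moreover have "i \<le> l i" using strict_mono_imp_increasing[OF l_mono] .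
      ultimately show "2 * p * T < l i" using b0 by linarith
    qed
    show "C * real (a + e) * (1 + (\<Sum>i<d. c i)) < real p" using pbig unfolding q_def M_def .
    show "r = real (a + e) * real T * s j * (1 + (\<Sum>i<d. c i))" unfolding r_def M_def ..
  qed
qed

theorem lemma1p2:
  fixes d :: nat and c :: "nat \<Rightarrow> real" and m :: enat
    and s :: "nat \<Rightarrow> real" and l :: "nat \<Rightarrow> nat"
  assumes c_pos: "\<forall>i<d. c i > 0"
    and m_pos: "m \<noteq> 0"
    and s_mono: "mono s" and s_ge1: "\<forall>j. s j \<ge> 1"
    and l_mono: "strict_mono l" and l_pos: "\<forall>i. l i > 0"
  shows "asdim_AN (ZK_carrier d l) (ZK_dist d c m s l) \<ge> enat d + m"
proof -
  let ?P = "asdim_AN_le (ZK_carrier d l) (ZK_dist d c m s l)"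
  have key: "enat d + m \<le> enat n" if P: "?P n" for n
  proof (rule ccontr)
    assume nle: "\<not> enat d + m \<le> enat n"
    show False
    proof (cases m)
      case (enat k)
      have k0: "k > 0" using m_pos enat by (simp add: zero_enat_def)
      have nD: "n < d + k" using nle enat by simp
      show False
      proof (rule finish[OF c_pos s_ge1 l_mono l_pos P order.refl nD])
        fix j0
        show "\<exists>j b0. j0 \<le> b0 \<and> (\<forall>i. b0 \<le> i \<longrightarrow> i < b0 + k \<longrightarrow> inflate m s i = s j)"
        proof (intro exI conjI allI impI)
          show "j0 \<le> j0 * k" using k0 by simp
          fix i assume "j0 * k \<le> i" "i < j0 * k + k"
          then have "i \<in> part m j0" using enat by (simp add: part_enat)
          then show "inflate m s i = s j0" by (rule inflate_part[OF m_pos])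
        qed
      qed
    next
      case infinity
      show False
      proof (rule finish[OF c_pos s_ge1 l_mono l_pos P _ _, of 0 "n + 1"])
        fix j0
        define j where "j = j0 + n + 1"
        show "\<exists>j b0. j0 \<le> b0 \<and> (\<forall>i. b0 \<le> i \<longrightarrow> i < b0 + (n + 1) \<longrightarrow> inflate m s i = s j)"
        proof (intro exI conjI allI impI)
          have "j \<le> j^2" by (simp add: power2_eq_square)
          then show "j0 \<le> j^2" unfolding j_def by simp
          fix i assume i: "j^2 \<le> i" "i < j^2 + (n + 1)"
          have "j^2 + (n + 1) \<le> (j+1)^2" unfolding j_def by (simp add: power2_eq_square)
          then have "i \<in> part m j" using infinity i by (simp add: part_inf)
          then show "inflate m s i = s j" by (rule inflate_part[OF m_pos])
        qed
      qed auto
    qed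
  qed
  show ?thesis
  proof (cases "\<exists>n. ?P n")
    case True
    then have "?P (LEAST n. ?P n)" by (rule LeastI_ex)
    then show ?thesis using key True by (simp add: asdim_AN_def)
  next
    case False
    then show ?thesis by (simp add: asdim_AN_def)
  qed
qed


end
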